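(* Let $T=(V,E)$ be an $X$-tree. Then $\mathrm{rk}^T(\mathcal{L})\le|E|-1$ for every bipartite $\mathcal{L}\subseteq\binom{X}{2}$. Moreover, for every bipartite $\mathcal{L}\subseteq\binom{X}{2}$ the following are equivalent: (i) $\mathrm{rk}^T(\mathcal{L})=|E|-1$; (ii) there is a cord $xy\in\binom{X}{2}$ such that $\mathcal{L}\cup\{xy\}$ is an edge-weight lasso for $T$; (iii) $\mathcal{L}$ is connected, and for every cord $xy$, $\mathcal{L}\cup\{xy\}$ is an edge-weight lasso for $T$ if and only if $\mathcal{L}\cup\{xy\}$ is not bipartite; (iv) $\mathcal{L}$ is connected, the closure $[\mathcal{L}]^T$ equals $A\vee B$ where $\{A,B\}$ is the (unique) bipartition of $X$ with $\mathcal{L}\subseteq A\vee B$, and $A\vee B$ is a hyperplane of $\mathbb{M}(T)$.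
   Context: Let $X$ be a finite set with $|X|=n\ge 3$. An $X$-tree is a finite tree $T=(V,E)$ whose set of degree-1 vertices is exactly $X$ and which has no vertices of degree $2$. A cord is a $2$-subset $xy$ of $X$. For each cord $xy$, $\lambda^T_{xy}:\mathbb{R}^E\to\mathbb{R}$, $\omega\mapsto\sum_{e\in E(x|y)}\omega(e)$, where $E(x|y)$ is the edge set of the path from $x$ to $y$. For $\mathcal{L}\subseteq\binom{X}{2}$, $\mathrm{rk}^T(\mathcal{L})$ is the dimension of the span of $\{\lambda^T_{xy}:xy\in\mathcal{L}\}$; $\mathbb{M}(T)$ is the matroid on $\binom{X}{2}$ with rank function $\mathrm{rk}^T$ (its rank is $|E|$). The closure of $\mathcal{L}$ is $[\mathcal{L}]^T=\{xy\in\binom{X}{2}:\mathrm{rk}^T(\mathcal{L}\cup\{xy\})=\mathrm{rk}^T(\mathcal{L})\}$; a hyperplane is a maximal subset of $\binom{X}{2}$ of rank less than $|E|$. An edge-weight lasso for $T$ is a set $\mathcal{L}$ with $\mathrm{rk}^T(\mathcal{L})=|E|$. $\mathcal{L}$ is called connected (resp. bipartite) if the graph $\Gamma(\mathcal{L})=(X,\mathcal{L})$ with vertex set $X$ and edge set $\mathcal{L}$ is connected (resp. bipartite). For disjoint $A,B\subseteq X$, $A\vee B:=\{ab:a\in A,b\in B\}$. *)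

theory Defs
  imports "HOL-Analysis.Analysis" "HOL-Library.Function_Algebras"
begin

definition adj_rel :: "'a set set \<Rightarrow> ('a \<times> 'a) set" where
  "adj_rel E = {(u, v). {u, v} \<in> E \<and> u \<noteq> v}"

definition graph_connected :: "'a set \<Rightarrow> 'a set set \<Rightarrow> bool" where
  "graph_connected V E \<longleftrightarrow> (\<forall>u\<in>V. \<forall>v\<in>V. (u, v) \<in> (adj_rel E)\<^sup>*)"

definition simple_graph :: "'a set \<Rightarrow> 'a set set \<Rightarrow> bool" where
  "simple_graph V E \<longleftrightarrow> finite V \<and> (\<forall>e\<in>E. \<exists>u v. e = {u, v} \<and> u \<noteq> v \<and> u \<in> V \<and> v \<in> V)"

definition is_tree :: "'a set \<Rightarrow> 'a set set \<Rightarrow> bool" where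
  "is_tree V E \<longleftrightarrow> simple_graph V E \<and> graph_connected V E
      \<and> (\<forall>e\<in>E. \<not> graph_connected V (E - {e}))"

definition degree :: "'a set set \<Rightarrow> 'a \<Rightarrow> nat" where
  "degree E v = card {e\<in>E. v \<in> e}"

definition X_tree :: "'a set \<Rightarrow> 'a set set \<Rightarrow> 'a set \<Rightarrow> bool" where
  "X_tree V E X \<longleftrightarrow> is_tree V E \<and> {v\<in>V. degree E v = 1} = X
      \<and> (\<forall>v\<in>V. degree E v \<noteq> 2)"

definition is_path :: "'a set set \<Rightarrow> 'a list \<Rightarrow> 'a \<Rightarrow> 'a \<Rightarrow> bool" where
  "is_path E ps x y \<longleftrightarrow> ps \<noteq> [] \<and> distinct ps \<and> hd ps = x \<and> last ps = y
      \<and> (\<forall>i. Suc i < length ps \<longrightarrow> {ps ! i, ps ! Suc i} \<in> E)"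

definition path_edge_set :: "'a list \<Rightarrow> 'a set set" where
  "path_edge_set ps = {{ps ! i, ps ! Suc i} | i. Suc i < length ps}"

definition path_edges :: "'a set set \<Rightarrow> 'a \<Rightarrow> 'a \<Rightarrow> 'a set set" where
  "path_edges E x y = (THE P. \<exists>ps. is_path E ps x y \<and> P = path_edge_set ps)"

text \<open>Edge weightings omega are functions from edges to reals (only values on E matter);
  lambda_xy maps omega to the sum of weights along the path from x to y.\<close>
definition lam :: "'a set set \<Rightarrow> 'a \<Rightarrow> 'a \<Rightarrow> ('a set \<Rightarrow> real) \<Rightarrow> real" where
  "lam E x y = (\<lambda>\<omega>. \<Sum>e\<in>path_edges E x y. \<omega> e)"

definition fscale :: "real \<Rightarrow> (('a set \<Rightarrow> real) \<Rightarrow> real) \<Rightarrow> (('a set \<Rightarrow> real) \<Rightarrow> real)" where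
  "fscale r f = (\<lambda>\<omega>. r * f \<omega>)"

definition cords :: "'a set \<Rightarrow> 'a set set" where
  "cords X = {c. c \<subseteq> X \<and> card c = 2}"

definition rk :: "'a set set \<Rightarrow> 'a set set \<Rightarrow> nat" where
  "rk E L = vector_space.dim fscale {lam E x y | x y. {x, y} \<in> L \<and> x \<noteq> y}"

definition closure_T :: "'a set set \<Rightarrow> 'a set \<Rightarrow> 'a set set \<Rightarrow> 'a set set" where
  "closure_T E X L = {c \<in> cords X. rk E (L \<union> {c}) = rk E L}"

definition hyperplane :: "'a set set \<Rightarrow> 'a set \<Rightarrow> 'a set set \<Rightarrow> bool" where
  "hyperplane E X H \<longleftrightarrow> H \<subseteq> cords X \<and> rk E H < card E
      \<and> (\<forall>H'. H \<subset> H' \<and> H' \<subseteq> cords X \<longrightarrow> \<not> rk E H' < card E)"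

definition edge_weight_lasso :: "'a set set \<Rightarrow> 'a set \<Rightarrow> 'a set set \<Rightarrow> bool" where
  "edge_weight_lasso E X L \<longleftrightarrow> L \<subseteq> cords X \<and> rk E L = card E"

definition join :: "'a set \<Rightarrow> 'a set \<Rightarrow> 'a set set" where
  "join A B = {{a, b} | a b. a \<in> A \<and> b \<in> B}"

definition cords_connected :: "'a set \<Rightarrow> 'a set set \<Rightarrow> bool" where
  "cords_connected X L \<longleftrightarrow> graph_connected X L"

definition cords_bipartite :: "'a set \<Rightarrow> 'a set set \<Rightarrow> bool" where
  "cords_bipartite X L \<longleftrightarrow> (\<exists>A B. A \<inter> B = {} \<and> A \<union> B = X \<and> L \<subseteq> join A B)"

end

theory Submission
  imports Defs
begin



lemma vs_fscale: "vector_space (fscale :: real \<Rightarrow> (('a set \<Rightarrow> real) \<Rightarrow> real) \<Rightarrow> _)"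
  by unfold_locales (auto simp: fscale_def fun_eq_iff algebra_simps)

interpretation VS: vector_space "fscale :: real \<Rightarrow> (('a set \<Rightarrow> real) \<Rightarrow> real) \<Rightarrow> _"
  by (rule vs_fscale)

lemma span_vanish:
  assumes "\<And>f. f \<in> S \<Longrightarrow> f w = 0" and "g \<in> VS.span S"
  shows "g w = 0"
  using assms(2)
proof (induction rule: VS.span_induct_alt)
  case base then show ?case by simp
next
  case (step c x y) then show ?case by (simp add: fscale_def assms(1))
qed

lemma not_in_span:
  assumes "\<And>f. f \<in> S \<Longrightarrow> f w = 0" and "g w \<noteq> 0"
  shows "g \<notin> VS.span S"
  using span_vanish[of S w g] assms by blast

lemma dim_insert_fin:
  fixes S :: "(('a set \<Rightarrow> real) \<Rightarrow> real) set"
  assumes fin: "finite S"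
  shows "VS.dim (insert x S) = (if x \<in> VS.span S then VS.dim S else VS.dim S + 1)"
proof -
  obtain B where B: "B \<subseteq> S" "VS.independent B" "S \<subseteq> VS.span B"
    using VS.maximal_independent_subset[of S] by blast
  have finB: "finite B" using B(1) fin finite_subset by blast
  have dS: "VS.dim S = card B" using VS.basis_card_eq_dim[OF B(1) B(3) B(2)] by simp
  have spB: "VS.span S = VS.span B"
  proof
    show "VS.span S \<subseteq> VS.span B" using VS.span_mono[OF B(3)] by (simp add: VS.span_span)
    show "VS.span B \<subseteq> VS.span S" using VS.span_mono[OF B(1)] .
  qed
  show ?thesis
  proof (cases "x \<in> VS.span S")
    case True
    have "VS.span (insert x S) = VS.span S" by (rule VS.span_redundant[OF True])
    then have "VS.dim (insert x S) = VS.dim S" by (rule VS.span_eq_dim)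
    then show ?thesis using True by simp
  next
    case False
    then have xB: "x \<notin> VS.span B" using spB by simp
    then have xnB: "x \<notin> B" using VS.span_base by blast
    have ind: "VS.independent (insert x B)" using VS.independent_insertI[OF xB B(2)] .
    have "card (insert x B) = VS.dim (insert x S)"
    proof (rule VS.basis_card_eq_dim)
      show "insert x B \<subseteq> insert x S" using B(1) by blast
      show "insert x S \<subseteq> VS.span (insert x B)"
        using B(3) VS.span_mono[of B "insert x B"] VS.span_base[of x "insert x B"] by blast
      show "VS.independent (insert x B)" by (rule ind)
    qed
    moreover have "card (insert x B) = card B + 1" using finB xnB by simp
    ultimately show ?thesis using False dS by simp
  qed
qed

lemma dim_mono_fin:
  fixes W :: "(('a set \<Rightarrow> real) \<Rightarrow> real) set"
  assumes "finite W" "V \<subseteq> VS.span W"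
  shows "VS.dim V \<le> VS.dim W"
proof -
  obtain B where B: "B \<subseteq> W" "VS.independent B" "W \<subseteq> VS.span B"
    using VS.maximal_independent_subset[of W] by blast
  have finB: "finite B" using B(1) assms(1) finite_subset by blast
  have dW: "VS.dim W = card B" using VS.basis_card_eq_dim[OF B(1) B(3) B(2)] by simp
  have "V \<subseteq> VS.span B"
    using VS.span_mono[OF B(3)] VS.span_span assms(2) by blast
  then show ?thesis using VS.dim_le_card[OF _ finB] dW by simp
qed

lemma dim_subset_fin:
  fixes T :: "(('a set \<Rightarrow> real) \<Rightarrow> real) set"
  assumes "finite T" "S \<subseteq> T" shows "VS.dim S \<le> VS.dim T"
  using dim_mono_fin[OF assms(1)] assms(2) VS.span_superset by blast

lemma dim_insert_new:
  fixes S :: "(('a set \<Rightarrow> real) \<Rightarrow> real) set"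
  assumes "finite S" "\<And>f. f \<in> S \<Longrightarrow> f w = 0" and "g w \<noteq> 0"
  shows "VS.dim (insert g S) = VS.dim S + 1"
  using not_in_span[of S w g] assms dim_insert_fin[OF assms(1)] by auto

lemma dim_insert_le:
  fixes S :: "(('a set \<Rightarrow> real) \<Rightarrow> real) set"
  assumes "finite S" shows "VS.dim (insert g S) \<le> VS.dim S + 1"
  using dim_insert_fin[OF assms] by simp



lemma adj_sym: "(u, v) \<in> adj_rel F \<Longrightarrow> (v, u) \<in> adj_rel F"
  by (auto simp: adj_rel_def insert_commute)

lemma conn_sym: "(x, y) \<in> (adj_rel F)\<^sup>* \<Longrightarrow> (y, x) \<in> (adj_rel F)\<^sup>*"
  by (induction rule: rtrancl_induct) (auto intro: converse_rtrancl_into_rtrancl adj_sym)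

lemma walk_conn:
  assumes "\<forall>j. i \<le> j \<and> j < k \<longrightarrow> (ps ! j, ps ! Suc j) \<in> adj_rel F" "i \<le> k"
  shows "(ps ! i, ps ! k) \<in> (adj_rel F)\<^sup>*"
  using assms
proof (induction k)
  case 0 then show ?case by simp
next
  case (Suc k)
  show ?case
  proof (cases "i = Suc k")
    case True then show ?thesis by simp
  next
    case False
    then have "(ps ! i, ps ! k) \<in> (adj_rel F)\<^sup>*" using Suc by auto
    moreover have "(ps ! k, ps ! Suc k) \<in> adj_rel F" using Suc False by auto
    ultimately show ?thesis by (rule rtrancl_into_rtrancl)
  qed
qed

lemma path_edge_distinct:
  assumes "distinct ps" "Suc i < length ps" "Suc j < length ps"
    "{ps ! i, ps ! Suc i} = {ps ! j, ps ! Suc j}"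
  shows "i = j"
proof -
  have "(ps ! i = ps ! j \<and> ps ! Suc i = ps ! Suc j) \<or> (ps ! i = ps ! Suc j \<and> ps ! Suc i = ps ! j)"
    using assms(4) by (auto simp: doubleton_eq_iff)
  then show ?thesis
    using assms(1-3) by (auto simp: nth_eq_iff_index_eq)
qed

lemma path_adj:
  assumes "is_path E ps x y" "Suc j < length ps" "{ps ! j, ps ! Suc j} \<noteq> e"
  shows "(ps ! j, ps ! Suc j) \<in> adj_rel (E - {e})"
proof -
  have "ps ! j \<noteq> ps ! Suc j" using assms(1,2) by (auto simp: is_path_def nth_eq_iff_index_eq)
  then show ?thesis using assms by (auto simp: is_path_def adj_rel_def)
qed

lemma path_len_last:
  assumes "is_path E ps x y"
  shows "ps ! 0 = x" "ps ! (length ps - 1) = y"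
  using assms by (auto simp: is_path_def hd_conv_nth last_conv_nth)

lemma path_edge_char:
  assumes tree: "is_tree V E" and p: "is_path E ps x y"
  shows "path_edge_set ps = {e\<in>E. (x, y) \<notin> (adj_rel (E - {e}))\<^sup>*}"
proof
  have ne: "ps \<noteq> []" and dist: "distinct ps" using p by (auto simp: is_path_def)
  note ends = path_len_last[OF p]
  show "path_edge_set ps \<subseteq> {e\<in>E. (x, y) \<notin> (adj_rel (E - {e}))\<^sup>*}"
  proof
    fix e assume "e \<in> path_edge_set ps"
    then obtain i where i: "Suc i < length ps" "e = {ps ! i, ps ! Suc i}"
      by (auto simp: path_edge_set_def)
    have eE: "e \<in> E" using p i by (auto simp: is_path_def)
    have "(x, y) \<notin> (adj_rel (E - {e}))\<^sup>*"
    proof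
      assume xy: "(x, y) \<in> (adj_rel (E - {e}))\<^sup>*"
      have nd: "(ps ! j, ps ! Suc j) \<in> adj_rel (E - {e})" if j: "Suc j < length ps" "j \<noteq> i" for j
      proof -
        have "{ps ! j, ps ! Suc j} \<noteq> e"
          using path_edge_distinct[OF dist j(1) i(1)] j(2) i(2) by blast
        then show ?thesis by (rule path_adj[OF p j(1)])
      qed
      have 1: "(ps ! 0, ps ! i) \<in> (adj_rel (E - {e}))\<^sup>*"
      proof (rule walk_conn)
        show "\<forall>j. 0 \<le> j \<and> j < i \<longrightarrow> (ps ! j, ps ! Suc j) \<in> adj_rel (E - {e})"
          using i(1) by (intro allI impI nd) auto
      qed simp
      have 2: "(ps ! Suc i, ps ! (length ps - 1)) \<in> (adj_rel (E - {e}))\<^sup>*"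
      proof (rule walk_conn)
        show "\<forall>j. Suc i \<le> j \<and> j < length ps - 1 \<longrightarrow> (ps ! j, ps ! Suc j) \<in> adj_rel (E - {e})"
          by (intro allI impI nd) auto
      qed (use i in simp)
      have uv: "(ps ! i, ps ! Suc i) \<in> (adj_rel (E - {e}))\<^sup>*"
      proof -
        have a: "(ps ! i, x) \<in> (adj_rel (E - {e}))\<^sup>*" using conn_sym[OF 1] ends(1) by simp
        have b: "(y, ps ! Suc i) \<in> (adj_rel (E - {e}))\<^sup>*" using conn_sym[OF 2] ends(2) by simp
        show ?thesis using rtrancl_trans[OF rtrancl_trans[OF a xy] b] .
      qed
      have sub: "adj_rel E \<subseteq> (adj_rel (E - {e}))\<^sup>*"
      proof
        fix p assume "p \<in> adj_rel E"
        then obtain a b where ab: "p = (a, b)" "{a, b} \<in> E" "a \<noteq> b" by (auto simp: adj_rel_def)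
        show "p \<in> (adj_rel (E - {e}))\<^sup>*"
        proof (cases "{a, b} = e")
          case False then show ?thesis using ab by (auto simp: adj_rel_def)
        next
          case True
          then have "(a = ps ! i \<and> b = ps ! Suc i) \<or> (a = ps ! Suc i \<and> b = ps ! i)"
            using i(2) by (auto simp: doubleton_eq_iff)
          then show ?thesis using uv conn_sym[OF uv] ab(1) by auto
        qed
      qed
      have gc: "graph_connected V E" using tree unfolding is_tree_def by blast
      have "graph_connected V (E - {e})"
        using gc rtrancl_subset_rtrancl[OF sub] unfolding graph_connected_def by blast
      then show False using tree eE unfolding is_tree_def by blast
    qed
    then show "e \<in> {e\<in>E. (x, y) \<notin> (adj_rel (E - {e}))\<^sup>*}" using eE by blast
  qed
  show "{e\<in>E. (x, y) \<notin> (adj_rel (E - {e}))\<^sup>*} \<subseteq> path_edge_set ps"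
  proof
    fix e assume e: "e \<in> {e\<in>E. (x, y) \<notin> (adj_rel (E - {e}))\<^sup>*}"
    show "e \<in> path_edge_set ps"
    proof (rule ccontr)
      assume ne2: "e \<notin> path_edge_set ps"
      have st: "(ps ! j, ps ! Suc j) \<in> adj_rel (E - {e})" if j: "Suc j < length ps" for j
      proof -
        have "{ps ! j, ps ! Suc j} \<noteq> e" using ne2 j by (auto simp: path_edge_set_def)
        then show ?thesis by (rule path_adj[OF p j])
      qed
      have "(ps ! 0, ps ! (length ps - 1)) \<in> (adj_rel (E - {e}))\<^sup>*"
      proof (rule walk_conn)
        show "\<forall>j. 0 \<le> j \<and> j < length ps - 1 \<longrightarrow> (ps ! j, ps ! Suc j) \<in> adj_rel (E - {e})"
          by (intro allI impI st) auto
      qed simp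
      then show False using e ends by simp
    qed
  qed
qed

lemma path_exists:
  assumes "(x, y) \<in> (adj_rel E)\<^sup>*"
  shows "\<exists>ps. is_path E ps x y"
  using assms
proof (induction rule: rtrancl_induct)
  case base
  show ?case by (rule exI[of _ "[x]"]) (auto simp: is_path_def)
next
  case (step z w)
  then obtain ps where p: "is_path E ps x z" by blast
  have zw: "{z, w} \<in> E" using step(2) by (auto simp: adj_rel_def)
  show ?case
  proof (cases "w \<in> set ps")
    case True
    then obtain k where k: "k < length ps" "ps ! k = w" by (auto simp: in_set_conv_nth)
    have len: "length (take (Suc k) ps) = Suc k" using k by simp
    have "is_path E (take (Suc k) ps) x w"
      using p k len unfolding is_path_def
      by (auto simp: hd_conv_nth last_conv_nth nth_take simp del: length_take)
    then show ?thesis by blast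
  next
    case False
    have "is_path E (ps @ [w]) x w"
      unfolding is_path_def
    proof (intro conjI allI impI)
      show "ps @ [w] \<noteq> []" by simp
      show "distinct (ps @ [w])" using p False by (auto simp: is_path_def)
      show "hd (ps @ [w]) = x" using p by (auto simp: is_path_def)
      show "last (ps @ [w]) = w" by simp
      fix i assume i: "Suc i < length (ps @ [w])"
      show "{(ps @ [w]) ! i, (ps @ [w]) ! Suc i} \<in> E"
      proof (cases "Suc i < length ps")
        case True then show ?thesis using p by (auto simp: is_path_def nth_append)
      next
        case False
        then have "Suc i = length ps" using i by simp
        moreover have "ps ! i = z"
        proof -
          have "i = length ps - 1" using \<open>Suc i = length ps\<close> by simp
          then show ?thesis using p by (auto simp: is_path_def last_conv_nth)
        qed
        ultimately show ?thesis using zw by (auto simp: nth_append)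
      qed
    qed
    then show ?thesis by blast
  qed
qed

lemma path_edges_eq:
  assumes tree: "is_tree V E" and p: "is_path E ps x y"
  shows "path_edges E x y = path_edge_set ps"
  unfolding path_edges_def
proof (rule the_equality)
  show "\<exists>ps'. is_path E ps' x y \<and> path_edge_set ps = path_edge_set ps'" using p by blast
next
  fix P assume "\<exists>ps'. is_path E ps' x y \<and> P = path_edge_set ps'"
  then obtain ps' where ps': "is_path E ps' x y" "P = path_edge_set ps'" by blast
  show "P = path_edge_set ps"
    unfolding ps'(2) path_edge_char[OF tree ps'(1)] path_edge_char[OF tree p] ..
qed

lemma path_edges_char:
  assumes tree: "is_tree V E" and "x \<in> V" "y \<in> V"
  shows "path_edges E x y = {e\<in>E. (x, y) \<notin> (adj_rel (E - {e}))\<^sup>*}"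
proof -
  have gc: "graph_connected V E" using tree unfolding is_tree_def by blast
  have c: "(x, y) \<in> (adj_rel E)\<^sup>*" using gc assms(2,3) unfolding graph_connected_def by simp
  obtain ps where p: "is_path E ps x y" using path_exists[OF c] by blast
  show ?thesis unfolding path_edges_eq[OF tree p] by (rule path_edge_char[OF tree p])
qed

lemma lam_sym:
  assumes tree: "is_tree V E" and "x \<in> V" "y \<in> V"
  shows "lam E x y = lam E y x"
proof -
  have "path_edges E x y = path_edges E y x"
    unfolding path_edges_char[OF tree assms(2,3)] path_edges_char[OF tree assms(3,2)]
  proof (intro Collect_cong conj_cong refl)
    fix e show "((x, y) \<notin> (adj_rel (E - {e}))\<^sup>*) = ((y, x) \<notin> (adj_rel (E - {e}))\<^sup>*)"
      using conn_sym[of x y "E - {e}"] conn_sym[of y x "E - {e}"] by blast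
  qed
  then show ?thesis by (simp add: lam_def)
qed


definition omega :: "'a set \<Rightarrow> ('a \<Rightarrow> real) \<Rightarrow> 'a set \<Rightarrow> real" where
  "omega X s e = (\<Sum>z\<in>{z\<in>X. z \<in> e}. s z)"

definition pedge :: "'a set set \<Rightarrow> 'a \<Rightarrow> 'a set" where
  "pedge E x = (THE e. e \<in> E \<and> x \<in> e)"

lemma xt_tree: "X_tree V E X \<Longrightarrow> is_tree V E"
  by (simp add: X_tree_def)

lemma xt_leaves: "X_tree V E X \<Longrightarrow> {v\<in>V. degree E v = 1} = X"
  by (simp add: X_tree_def)

lemma xt_XV: "X_tree V E X \<Longrightarrow> X \<subseteq> V"
proof -
  assume "X_tree V E X"
  then have "{v\<in>V. degree E v = 1} = X" by (rule xt_leaves)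
  then show "X \<subseteq> V" by (metis (no_types, lifting) mem_Collect_eq subsetI)
qed

lemma xt_sg: "X_tree V E X \<Longrightarrow> simple_graph V E"
  by (simp add: X_tree_def is_tree_def)

lemma xt_finV: "X_tree V E X \<Longrightarrow> finite V"
proof -
  assume "X_tree V E X"
  then have "simple_graph V E" by (rule xt_sg)
  then show "finite V" by (simp add: simple_graph_def)
qed

lemma xt_finX: "X_tree V E X \<Longrightarrow> finite X"
  using xt_XV xt_finV finite_subset by metis

lemma xt_edge: "X_tree V E X \<Longrightarrow> e \<in> E \<Longrightarrow> \<exists>u v. e = {u, v} \<and> u \<noteq> v \<and> u \<in> V \<and> v \<in> V"
proof -
  assume "X_tree V E X" "e \<in> E"
  then have "simple_graph V E" by (simp add: xt_sg)
  then show ?thesis using \<open>e \<in> E\<close> unfolding simple_graph_def by simp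
qed

lemma xt_finE: "X_tree V E X \<Longrightarrow> finite E"
proof -
  assume xt: "X_tree V E X"
  have "E \<subseteq> Pow V"
  proof
    fix e assume "e \<in> E"
    then obtain u v where "e = {u, v}" "u \<in> V" "v \<in> V" using xt_edge[OF xt] by blast
    then show "e \<in> Pow V" by simp
  qed
  then show "finite E" using xt_finV[OF xt] finite_subset by (metis finite_Pow_iff)
qed

lemma xt_conn: "X_tree V E X \<Longrightarrow> u \<in> V \<Longrightarrow> v \<in> V \<Longrightarrow> (u, v) \<in> (adj_rel E)\<^sup>*"
proof -
  assume "X_tree V E X" "u \<in> V" "v \<in> V"
  then have "graph_connected V E" by (simp add: X_tree_def is_tree_def)
  then show ?thesis using \<open>u \<in> V\<close> \<open>v \<in> V\<close> unfolding graph_connected_def by simp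
qed

lemma xt_deg: "X_tree V E X \<Longrightarrow> x \<in> X \<Longrightarrow> card {e\<in>E. x \<in> e} = 1"
proof -
  assume xt: "X_tree V E X" and x: "x \<in> X"
  have "x \<in> {v\<in>V. degree E v = 1}" using xt_leaves[OF xt] x by simp
  then show ?thesis by (simp add: degree_def)
qed

lemma pedge_eq:
  assumes xt: "X_tree V E X" and x: "x \<in> X"
  shows "{e\<in>E. x \<in> e} = {pedge E x}"
proof -
  have c1: "card {e'\<in>E. x \<in> e'} = Suc 0" using xt_deg[OF xt x] by simp
  obtain e where e: "{e'\<in>E. x \<in> e'} = {e}"
    using card_1_singleton_iff[THEN iffD1, OF c1] by (elim exE)
  have "pedge E x = e" unfolding pedge_def
  proof (rule the_equality)
    have "e \<in> {e'\<in>E. x \<in> e'}" unfolding e by simp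
    then show "e \<in> E \<and> x \<in> e" by simp
    fix e' assume "e' \<in> E \<and> x \<in> e'"
    then have "e' \<in> {e'\<in>E. x \<in> e'}" by simp
    then show "e' = e" unfolding e by simp
  qed
  then show ?thesis using e by simp
qed

lemma pedge_in: "X_tree V E X \<Longrightarrow> x \<in> X \<Longrightarrow> pedge E x \<in> E \<and> x \<in> pedge E x"
proof -
  assume xt: "X_tree V E X" and x: "x \<in> X"
  have "pedge E x \<in> {e\<in>E. x \<in> e}" unfolding pedge_eq[OF xt x] by simp
  then show ?thesis by simp
qed

lemma pedge_uniq: "X_tree V E X \<Longrightarrow> x \<in> X \<Longrightarrow> e \<in> E \<Longrightarrow> x \<in> e \<Longrightarrow> e = pedge E x"
proof -
  assume xt: "X_tree V E X" and x: "x \<in> X" and e: "e \<in> E" "x \<in> e"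
  have "e \<in> {e\<in>E. x \<in> e}" using e by simp
  then show ?thesis unfolding pedge_eq[OF xt x] by simp
qed

lemma pedge_leaf:
  assumes xt: "X_tree V E X" and n3: "3 \<le> card X" and x: "x \<in> X"
  shows "{z\<in>X. z \<in> pedge E x} = {x}"
proof -
  have pe: "pedge E x \<in> E" "x \<in> pedge E x" using pedge_in[OF xt x] by auto
  obtain a b where ab: "pedge E x = {a, b}" "a \<noteq> b" using xt_edge[OF xt pe(1)] by blast
  have "\<exists>w. pedge E x = {x, w} \<and> w \<noteq> x"
  proof (cases "x = a")
    case True then show ?thesis using ab by blast
  next
    case False then have "x = b" using ab pe(2) by simp
    then show ?thesis using ab by (metis insert_commute)
  qed
  then obtain w where w: "pedge E x = {x, w}" "w \<noteq> x" by blast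
  have "w \<notin> X"
  proof
    assume wX: "w \<in> X"
    have ew: "pedge E w = {x, w}" using pedge_uniq[OF xt wX pe(1)] w by simp
    have fin: "finite X" using xt_finX[OF xt] .
    have "card (X - {x, w}) > 0"
    proof -
      have "card {x, w} = 2" using w by simp
      then have "card (X - {x, w}) = card X - 2" using wX x fin by (simp add: card_Diff_subset)
      then show ?thesis using n3 by simp
    qed
    then have "X - {x, w} \<noteq> {}" by (metis card.empty less_irrefl)
    then obtain z where z: "z \<in> X" "z \<noteq> x" "z \<noteq> w" by blast
    have "(x, z) \<in> (adj_rel E)\<^sup>*" using xt_conn[OF xt] xt_XV[OF xt] x z(1) by blast
    then have "z \<in> {x, w}"
    proof (induction rule: rtrancl_induct)
      case base then show ?case by simp
    next
      case (step a b)
      have abE: "{a, b} \<in> E" "a \<noteq> b" using step(2) by (auto simp: adj_rel_def)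
      show ?case
      proof (cases "a = x")
        case True
        then have "{a, b} = {x, w}" using pedge_uniq[OF xt x abE(1)] w by simp
        then show ?thesis using abE(2) True by (auto simp: doubleton_eq_iff)
      next
        case False
        then have "a = w" using step(3) by simp
        then have "{a, b} = {x, w}" using pedge_uniq[OF xt wX abE(1)] ew by simp
        then show ?thesis using abE(2) \<open>a = w\<close> by (auto simp: doubleton_eq_iff)
      qed
    qed
    then show False using z by simp
  qed
  then show ?thesis using w x by auto
qed

lemma delta_omega:
  assumes "X_tree V E X" "3 \<le> card X" "x \<in> X"
  shows "omega X s (pedge E x) = s x"
  unfolding omega_def pedge_leaf[OF assms] by simp

lemma lam_omega:
  assumes xt: "X_tree V E X" and x: "x \<in> X" and y: "y \<in> X" and xy: "x \<noteq> y"
  shows "lam E x y (omega X s) = s x + s y"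
proof -
  have tree: "is_tree V E" using xt_tree[OF xt] .
  obtain ps where p: "is_path E ps x y"
    using path_exists[OF xt_conn[OF xt]] xt_XV[OF xt] x y by blast
  define P where "P = path_edge_set ps"
  have PE: "path_edges E x y = P" unfolding P_def by (rule path_edges_eq[OF tree p])
  have PsubE: "P \<subseteq> E" using p unfolding P_def path_edge_set_def is_path_def by blast
  have finE: "finite E" using xt_finE[OF xt] .
  have finP: "finite P" using PsubE finE finite_subset by blast
  have finX: "finite X" using xt_finX[OF xt] .
  have dist: "distinct ps" and ne: "ps \<noteq> []" using p by (auto simp: is_path_def)
  note ends = path_len_last[OF p]
  have len2: "2 \<le> length ps"
  proof (rule ccontr)
    assume "\<not> 2 \<le> length ps"
    moreover have "length ps \<noteq> 0" using ne by simp
    ultimately have "length ps = 1" by linarith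
    then show False using ends xy by simp
  qed
  have cntle: "card {e\<in>P. z \<in> e} \<le> 1" if z: "z \<in> X" for z
  proof -
    have "{e\<in>P. z \<in> e} \<subseteq> {e\<in>E. z \<in> e}" using PsubE by blast
    then show ?thesis using card_mono[of "{e\<in>E. z \<in> e}"] finE xt_deg[OF xt z] by simp
  qed
  have cnt: "card {e\<in>P. z \<in> e} = (if z = x \<or> z = y then 1 else 0)" if z: "z \<in> X" for z
  proof (cases "z = x \<or> z = y")
    case True
    have "\<exists>i. {ps ! 0, ps ! 1} = {ps ! i, ps ! Suc i} \<and> Suc i < length ps"
      using len2 by (intro exI[of _ 0]) simp
    then have "{ps ! 0, ps ! 1} \<in> P" unfolding P_def path_edge_set_def by simp
    moreover have "\<exists>i. {ps ! (length ps - 2), ps ! Suc (length ps - 2)} = {ps ! i, ps ! Suc i} \<and> Suc i < length ps"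
      using len2 by (intro exI[of _ "length ps - 2"]) simp
    then have "{ps ! (length ps - 2), ps ! Suc (length ps - 2)} \<in> P" unfolding P_def path_edge_set_def by simp
    moreover have "ps ! Suc (length ps - 2) = ps ! (length ps - 1)" using len2
      by (simp add: Suc_diff_Suc numeral_2_eq_2)
    ultimately have "{e\<in>P. z \<in> e} \<noteq> {}" using True ends by auto
    then have "card {e\<in>P. z \<in> e} \<noteq> 0" using finP by simp
    then show ?thesis using cntle[OF z] True by simp
  next
    case False
    have "{e\<in>P. z \<in> e} = {}"
    proof (rule ccontr)
      assume "{e\<in>P. z \<in> e} \<noteq> {}"
      then obtain i where i: "Suc i < length ps" "z \<in> {ps ! i, ps ! Suc i}"
        unfolding P_def path_edge_set_def by blast
      then obtain j where j: "j < length ps" "ps ! j = z" by (metis Suc_lessD insert_iff singletonD)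
      have j0: "j \<noteq> 0"
      proof
        assume "j = 0" then show False using j ends False by simp
      qed
      have jl: "j \<noteq> length ps - 1"
      proof
        assume "j = length ps - 1" then show False using j ends False by simp
      qed
      have "\<exists>i. {ps ! (j - 1), ps ! Suc (j - 1)} = {ps ! i, ps ! Suc i} \<and> Suc i < length ps"
        using j j0 by (intro exI[of _ "j - 1"]) simp
      moreover have "z \<in> {ps ! (j - 1), ps ! Suc (j - 1)}" using j j0 by simp
      ultimately have e1: "{ps ! (j - 1), ps ! Suc (j - 1)} \<in> {e\<in>P. z \<in> e}"
        unfolding P_def path_edge_set_def by simp
      have "\<exists>i. {ps ! j, ps ! Suc j} = {ps ! i, ps ! Suc i} \<and> Suc i < length ps"
        using j jl by (intro exI[of _ j]) simp
      moreover have "z \<in> {ps ! j, ps ! Suc j}" using j by simp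
      ultimately have e2: "{ps ! j, ps ! Suc j} \<in> {e\<in>P. z \<in> e}"
        unfolding P_def path_edge_set_def by simp
      have sj: "Suc j < length ps" using j jl by simp
      have sj1: "Suc (j - 1) < length ps" using j j0 by simp
      have "{ps ! (j - 1), ps ! Suc (j - 1)} \<noteq> {ps ! j, ps ! Suc j}"
      proof
        assume "{ps ! (j - 1), ps ! Suc (j - 1)} = {ps ! j, ps ! Suc j}"
        then have "j - 1 = j" by (rule path_edge_distinct[OF dist sj1 sj])
        then show False using j0 by simp
      qed
      then have "card {e\<in>P. z \<in> e} \<ge> 2"
        using e1 e2 finP card_mono[of "{e\<in>P. z \<in> e}" "{{ps ! (j - 1), ps ! Suc (j - 1)}, {ps ! j, ps ! Suc j}}"]
        by auto
      then show False using cntle[OF z] by simp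
    qed
    then have "card {e\<in>P. z \<in> e} = 0" by (metis card.empty)
    then show ?thesis using False by simp
  qed
  have "lam E x y (omega X s) = (\<Sum>e\<in>P. \<Sum>z\<in>{z\<in>X. z \<in> e}. s z)"
    by (simp add: lam_def omega_def PE)
  also have "\<dots> = (\<Sum>z\<in>X. \<Sum>e\<in>{e\<in>P. z \<in> e}. s z)"
    by (rule sum.swap_restrict[OF finP finX])
  also have "\<dots> = (\<Sum>z\<in>X. (if z = x then s x else 0) + (if z = y then s y else 0))"
  proof (rule sum.cong[OF refl])
    fix z assume z: "z \<in> X"
    have "(\<Sum>e\<in>{e\<in>P. z \<in> e}. s z) = real (card {e\<in>P. z \<in> e}) * s z" by simp
    then show "(\<Sum>e\<in>{e\<in>P. z \<in> e}. s z) = (if z = x then s x else 0) + (if z = y then s y else 0)"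
      using cnt[OF z] xy by auto
  qed
  also have "\<dots> = s x + s y"
    using finX x y by (simp add: sum.distrib)
  finally show ?thesis .
qed
definition Sset :: "'a set set \<Rightarrow> 'a set set \<Rightarrow> (('a set \<Rightarrow> real) \<Rightarrow> real) set" where
  "Sset E L = {lam E x y | x y. {x, y} \<in> L \<and> x \<noteq> y}"

definition delta :: "'a set \<Rightarrow> ('a set \<Rightarrow> real) \<Rightarrow> real" where
  "delta e = (\<lambda>w. w e)"

definition sgnA :: "'a set \<Rightarrow> 'a \<Rightarrow> real" where
  "sgnA A z = (if z \<in> A then 1 else -1)"

lemma rk_Sset: "rk E L = VS.dim (Sset E L)"
  by (simp add: rk_def Sset_def)

lemma cords_elem:
  assumes "c \<in> cords X"
  obtains x y where "c = {x, y}" "x \<noteq> y" "x \<in> X" "y \<in> X"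
proof -
  have "c \<subseteq> X" "card c = 2" using assms by (auto simp: cords_def)
  then obtain x y where "c = {x, y}" "x \<noteq> y" by (auto simp: card_2_iff)
  then show ?thesis using that \<open>c \<subseteq> X\<close> by blast
qed

lemma cords_mem: "x \<in> X \<Longrightarrow> y \<in> X \<Longrightarrow> x \<noteq> y \<Longrightarrow> {x, y} \<in> cords X"
  by (simp add: cords_def)

lemma Sset_fin:
  assumes "L \<subseteq> cords X" "finite X"
  shows "finite (Sset E L)"
proof -
  have "Sset E L \<subseteq> (\<lambda>p. lam E (fst p) (snd p)) ` (X \<times> X)"
  proof
    fix f assume "f \<in> Sset E L"
    then obtain x y where f: "f = lam E x y" "{x, y} \<in> L" by (auto simp: Sset_def)
    then have "x \<in> X" "y \<in> X" using assms(1) by (auto simp: cords_def)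
    then show "f \<in> (\<lambda>p. lam E (fst p) (snd p)) ` (X \<times> X)" using f(1)
      by (intro rev_image_eqI[of "(x, y)"]) auto
  qed
  then show ?thesis using assms(2) finite_subset by blast
qed

lemma Sset_mono: "L \<subseteq> L' \<Longrightarrow> Sset E L \<subseteq> Sset E L'"
  unfolding Sset_def by blast

lemma sum_fun_apply: "finite P \<Longrightarrow> sum f P w = (\<Sum>e\<in>P. f e w)"
  by (induction rule: finite_induct) (simp_all add: plus_fun_def zero_fun_def)

lemma lam_span:
  assumes xt: "X_tree V E X" and x: "x \<in> X" and y: "y \<in> X"
  shows "lam E x y \<in> VS.span (delta ` E)"
proof -
  have tree: "is_tree V E" using xt_tree[OF xt] .
  have xV: "x \<in> V" and yV: "y \<in> V" using xt_XV[OF xt] x y by auto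
  have PE: "path_edges E x y \<subseteq> E"
    unfolding path_edges_char[OF tree xV yV] by blast
  have finP: "finite (path_edges E x y)" using PE xt_finE[OF xt] finite_subset by blast
  have "lam E x y = (\<Sum>e\<in>path_edges E x y. delta e)"
    by (rule ext) (simp add: lam_def delta_def sum_fun_apply[OF finP])
  also have "\<dots> \<in> VS.span (delta ` E)"
    by (rule VS.span_sum) (use PE in \<open>auto intro: VS.span_base\<close>)
  finally show ?thesis .
qed

lemma Sset_span:
  assumes xt: "X_tree V E X" and L: "L \<subseteq> cords X"
  shows "Sset E L \<subseteq> VS.span (delta ` E)"
proof
  fix f assume "f \<in> Sset E L"
  then obtain x y where f: "f = lam E x y" "{x, y} \<in> L" by (auto simp: Sset_def)
  then have "x \<in> X" "y \<in> X" using L by (auto simp: cords_def)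
  then show "f \<in> VS.span (delta ` E)" using lam_span[OF xt] f(1) by simp
qed

lemma Sset_insert:
  assumes xt: "X_tree V E X" and a: "a \<in> X" and b: "b \<in> X" and ab: "a \<noteq> b"
  shows "Sset E (L \<union> {{a, b}}) = insert (lam E a b) (Sset E L)"
proof -
  have sym: "lam E b a = lam E a b"
    using lam_sym[OF xt_tree[OF xt]] xt_XV[OF xt] a b by blast
  have "Sset E (L \<union> {{a, b}}) = Sset E L \<union> {lam E x y | x y. {x, y} = {a, b} \<and> x \<noteq> y}"
    unfolding Sset_def by blast
  also have "{lam E x y | x y. {x, y} = {a, b} \<and> x \<noteq> y} = {lam E a b}"
  proof
    show "{lam E x y | x y. {x, y} = {a, b} \<and> x \<noteq> y} \<subseteq> {lam E a b}"
    proof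
      fix f assume "f \<in> {lam E x y | x y. {x, y} = {a, b} \<and> x \<noteq> y}"
      then obtain x y where "f = lam E x y" "{x, y} = {a, b}" by blast
      then have "f = lam E a b \<or> f = lam E b a" by (auto simp: doubleton_eq_iff)
      then show "f \<in> {lam E a b}" using sym by auto
    qed
    show "{lam E a b} \<subseteq> {lam E x y | x y. {x, y} = {a, b} \<and> x \<noteq> y}" using ab by blast
  qed
  finally show ?thesis by simp
qed

lemma vanish:
  assumes xt: "X_tree V E X" and L: "L \<subseteq> cords X"
    and s: "\<And>x y. {x, y} \<in> L \<Longrightarrow> x \<noteq> y \<Longrightarrow> s x + s y = 0"
    and f: "f \<in> Sset E L"
  shows "f (omega X s) = 0"
proof -
  obtain x y where fx: "f = lam E x y" "{x, y} \<in> L" "x \<noteq> y" using f by (auto simp: Sset_def)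
  then have "x \<in> X" "y \<in> X" using L by (auto simp: cords_def)
  then show ?thesis using lam_omega[OF xt _ _ fx(3)] fx s by simp
qed

lemma dim_insert_new':
  fixes S :: "(('a set \<Rightarrow> real) \<Rightarrow> real) set"
  assumes "finite S" "\<forall>f\<in>S. f w = 0" "g w \<noteq> 0"
  shows "VS.dim (insert g S) = VS.dim S + 1"
  by (rule dim_insert_new[of S w g]) (use assms in auto)

lemma card_delta: "finite E \<Longrightarrow> card (delta ` E) \<le> card E"
  by (rule card_image_le)

lemma bound1:
  assumes xt: "X_tree V E X" and L: "L \<subseteq> cords X"
    and van: "\<And>f. f \<in> Sset E L \<Longrightarrow> f w = 0"
    and g: "g \<in> VS.span (delta ` E)" "g w \<noteq> 0"
  shows "rk E L + 1 \<le> card E"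
proof -
  have finS: "finite (Sset E L)" using Sset_fin[OF L xt_finX[OF xt]] .
  have finE: "finite E" using xt_finE[OF xt] .
  have "rk E L + 1 = VS.dim (insert g (Sset E L))"
  proof -
    have vb: "\<forall>f\<in>Sset E L. f w = 0" using van by blast
    show ?thesis using dim_insert_new'[of "Sset E L" w g, OF finS vb g(2)] unfolding rk_Sset by simp
  qed
  also have "\<dots> \<le> card (delta ` E)"
    by (rule VS.dim_le_card) (use Sset_span[OF xt L] g(1) finE in auto)
  also have "\<dots> \<le> card E" using card_delta[OF finE] .
  finally show ?thesis .
qed

lemma bound2:
  assumes xt: "X_tree V E X" and L: "L \<subseteq> cords X"
    and van1: "\<And>f. f \<in> Sset E L \<Longrightarrow> f w1 = 0"
    and van2: "\<And>f. f \<in> Sset E L \<Longrightarrow> f w2 = 0"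
    and g1: "g1 \<in> VS.span (delta ` E)" "g1 w1 \<noteq> 0" "g1 w2 = 0"
    and g2: "g2 \<in> VS.span (delta ` E)" "g2 w2 \<noteq> 0"
  shows "rk E L + 2 \<le> card E"
proof -
  have finS: "finite (Sset E L)" using Sset_fin[OF L xt_finX[OF xt]] .
  have finE: "finite E" using xt_finE[OF xt] .
  have d1: "VS.dim (insert g1 (Sset E L)) = rk E L + 1"
  proof -
    have vb: "\<forall>f\<in>Sset E L. f w1 = 0" using van1 by blast
    show ?thesis using dim_insert_new'[of "Sset E L" w1 g1, OF finS vb g1(2)] unfolding rk_Sset by simp
  qed
  have van2': "\<And>f. f \<in> insert g1 (Sset E L) \<Longrightarrow> f w2 = 0" using van2 g1(3) by blast
  have "rk E L + 2 = VS.dim (insert g2 (insert g1 (Sset E L)))"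
  proof -
    have vb: "\<forall>f\<in>insert g1 (Sset E L). f w2 = 0" using van2' by blast
    have fin2: "finite (insert g1 (Sset E L))" using finS by simp
    show ?thesis using dim_insert_new'[of "insert g1 (Sset E L)" w2 g2, OF fin2 vb g2(2)] d1 by simp
  qed
  also have "\<dots> \<le> card (delta ` E)"
    by (rule VS.dim_le_card) (use Sset_span[OF xt L] g1(1) g2(1) finE in auto)
  also have "\<dots> \<le> card E" using card_delta[OF finE] .
  finally show ?thesis .
qed

lemma delta_span: "X_tree V E X \<Longrightarrow> x \<in> X \<Longrightarrow> delta (pedge E x) \<in> VS.span (delta ` E)"
proof -
  assume xt: "X_tree V E X" and x: "x \<in> X"
  have "pedge E x \<in> E" using pedge_in[OF xt x] by simp
  then have "delta (pedge E x) \<in> delta ` E" by simp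
  then show ?thesis by (rule VS.span_base)
qed

lemma delta_eval: "X_tree V E X \<Longrightarrow> 3 \<le> card X \<Longrightarrow> x \<in> X \<Longrightarrow> delta (pedge E x) (omega X s) = s x"
  unfolding delta_def by (rule delta_omega)

lemma join_side:
  assumes "{z, w} \<in> join A B" "A \<inter> B = {}"
  shows "(z \<in> A \<and> w \<in> B) \<or> (z \<in> B \<and> w \<in> A)"
proof -
  obtain a b where ab: "{z, w} = {a, b}" "a \<in> A" "b \<in> B" using assms(1) by (auto simp: join_def)
  then have "(z = a \<and> w = b) \<or> (z = b \<and> w = a)" by (auto simp: doubleton_eq_iff)
  then show ?thesis using ab by blast
qed

lemma join_mem: "a \<in> A \<Longrightarrow> b \<in> B \<Longrightarrow> {a, b} \<in> join A B"
  by (auto simp: join_def)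

lemma join_cords: "A \<inter> B = {} \<Longrightarrow> A \<union> B = X \<Longrightarrow> join A B \<subseteq> cords X"
proof
  fix c assume AB: "A \<inter> B = {}" "A \<union> B = X" and c: "c \<in> join A B"
  then obtain a b where ab: "c = {a, b}" "a \<in> A" "b \<in> B" by (auto simp: join_def)
  then have "a \<noteq> b" using AB(1) by blast
  then show "c \<in> cords X" using ab AB(2) cords_mem[of a X b] by blast
qed

lemma sgn_vanish:
  assumes "L \<subseteq> join A B" "A \<inter> B = {}" "{x, y} \<in> L"
  shows "sgnA A x + sgnA A y = 0"
  using join_side[of x y A B] assms by (auto simp: sgnA_def)

lemma vanish_sgn:
  assumes xt: "X_tree V E X" and L: "L \<subseteq> cords X" and J: "L \<subseteq> join A B" and AB: "A \<inter> B = {}"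
    and f: "f \<in> Sset E L"
  shows "f (omega X (sgnA A)) = 0"
proof (rule vanish[OF xt L _ f])
  fix x y assume "{x, y} \<in> L" "x \<noteq> y"
  then show "sgnA A x + sgnA A y = 0" using sgn_vanish[OF J AB] by blast
qed

lemma nonempty_X: "3 \<le> card X \<Longrightarrow> \<exists>x. x \<in> X"
  by (metis all_not_in_conv card.empty not_numeral_le_zero)

lemma bip_bound:
  assumes xt: "X_tree V E X" and n3: "3 \<le> card X" and L: "L \<subseteq> cords X"
    and J: "L \<subseteq> join A B" and AB: "A \<inter> B = {}"
  shows "rk E L + 1 \<le> card E"
proof -
  obtain x0 where x0: "x0 \<in> X" using nonempty_X[OF n3] by blast
  show ?thesis
  proof (rule bound1[OF xt L])
    fix f assume "f \<in> Sset E L"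
    then show "f (omega X (sgnA A)) = 0" by (rule vanish_sgn[OF xt L J AB])
  next
    show "delta (pedge E x0) \<in> VS.span (delta ` E)" by (rule delta_span[OF xt x0])
    show "delta (pedge E x0) (omega X (sgnA A)) \<noteq> 0"
      using delta_eval[OF xt n3 x0] by (simp add: sgnA_def)
  qed
qed

lemma raise:
  assumes xt: "X_tree V E X" and n3: "3 \<le> card X" and L: "L \<subseteq> cords X"
    and J: "L \<subseteq> join A B" and AB: "A \<inter> B = {}"
    and a: "a \<in> X" "a' \<in> X" "a \<noteq> a'" and same: "a \<in> A \<longleftrightarrow> a' \<in> A"
  shows "rk E (L \<union> {{a, a'}}) = rk E L + 1"
proof -
  have finS: "finite (Sset E L)" using Sset_fin[OF L xt_finX[OF xt]] .
  have van: "\<And>f. f \<in> Sset E L \<Longrightarrow> f (omega X (sgnA A)) = 0"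
    by (rule vanish_sgn[OF xt L J AB])
  have nz: "lam E a a' (omega X (sgnA A)) \<noteq> 0"
    using lam_omega[OF xt a] same by (simp add: sgnA_def)
  have vb: "\<forall>f\<in>Sset E L. f (omega X (sgnA A)) = 0" using van by blast
  show ?thesis using dim_insert_new'[of "Sset E L" "omega X (sgnA A)" "lam E a a'", OF finS vb nz] unfolding rk_Sset Sset_insert[OF xt a] by simp
qed

lemma ins_le:
  assumes xt: "X_tree V E X" and L: "L \<subseteq> cords X" and c: "c \<in> cords X"
  shows "rk E (L \<union> {c}) \<le> rk E L + 1"
proof -
  obtain x y where xy: "c = {x, y}" "x \<noteq> y" "x \<in> X" "y \<in> X" using cords_elem[OF c] by blast
  have finS: "finite (Sset E L)" using Sset_fin[OF L xt_finX[OF xt]] .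
  show ?thesis using dim_insert_le[OF finS] Sset_insert[OF xt xy(3,4,2)] rk_Sset xy(1) by metis
qed

lemma rk_mono:
  assumes xt: "X_tree V E X" and "L \<subseteq> L'" "L' \<subseteq> cords X"
  shows "rk E L \<le> rk E L'"
  unfolding rk_Sset
  by (rule dim_subset_fin[OF Sset_fin[OF assms(3) xt_finX[OF xt]] Sset_mono[OF assms(2)]])

lemma two_in: "2 \<le> card S \<Longrightarrow> \<exists>a a'. a \<in> S \<and> a' \<in> S \<and> a \<noteq> a'"
proof -
  assume "2 \<le> card S"
  then obtain T where "T \<subseteq> S" "card T = 2" by (metis obtain_subset_with_card_n)
  then show ?thesis by (auto simp: card_2_iff)
qed

lemma same_side_pair:
  assumes n3: "3 \<le> card X" and AB: "A \<inter> B = {}" "A \<union> B = X"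
  shows "\<exists>a a'. a \<in> X \<and> a' \<in> X \<and> a \<noteq> a' \<and> (a \<in> A \<longleftrightarrow> a' \<in> A)"
proof -
  have "card X \<le> card A + card B" using AB(2) card_Un_le by metis
  then have "2 \<le> card A \<or> 2 \<le> card B" using n3 by linarith
  then show ?thesis
  proof
    assume "2 \<le> card A"
    then obtain a a' where "a \<in> A" "a' \<in> A" "a \<noteq> a'" using two_in by blast
    then show ?thesis using AB by blast
  next
    assume "2 \<le> card B"
    then obtain a a' where "a \<in> B" "a' \<in> B" "a \<noteq> a'" using two_in by blast
    then show ?thesis using AB by blast
  qed
qed

lemma nonbip:
  assumes J: "L \<subseteq> join A B" and AB: "A \<inter> B = {}" "A \<union> B = X"
    and con: "cords_connected X L"
    and a: "a \<in> X" "a' \<in> X" and same: "a \<in> A \<longleftrightarrow> a' \<in> A"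
  shows "\<not> cords_bipartite X (L \<union> {{a, a'}})"
proof
  assume "cords_bipartite X (L \<union> {{a, a'}})"
  then obtain A' B' where AB': "A' \<inter> B' = {}" "A' \<union> B' = X" "L \<union> {{a, a'}} \<subseteq> join A' B'"
    unfolding cords_bipartite_def by blast
  have "(a, a') \<in> (adj_rel L)\<^sup>*" using con a unfolding cords_connected_def graph_connected_def by blast
  then have "((a' \<in> A) = (a' \<in> A')) = ((a \<in> A) = (a \<in> A'))"
  proof (induction rule: rtrancl_induct)
    case base then show ?case by simp
  next
    case (step z w)
    have "{z, w} \<in> L" using step(2) by (auto simp: adj_rel_def)
    then have "{z, w} \<in> join A B" "{z, w} \<in> join A' B'" using J AB'(3) by auto
    then have "((z \<in> A \<and> w \<in> B) \<or> (z \<in> B \<and> w \<in> A))" "((z \<in> A' \<and> w \<in> B') \<or> (z \<in> B' \<and> w \<in> A'))"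
      using join_side AB(1) AB'(1) by metis+
    then have "((w \<in> A) = (w \<in> A')) = ((z \<in> A) = (z \<in> A'))" using AB(1) AB'(1) by blast
    then show ?case using step(3) by simp
  qed
  moreover have "{a, a'} \<in> join A' B'" using AB'(3) by auto
  then have "(a \<in> A' \<and> a' \<in> B') \<or> (a \<in> B' \<and> a' \<in> A')" using join_side AB'(1) by metis
  ultimately show False using same AB'(1) by blast
qed

lemma disc:
  assumes xt: "X_tree V E X" and n3: "3 \<le> card X" and L: "L \<subseteq> cords X"
    and J: "L \<subseteq> join A B" and AB: "A \<inter> B = {}"
    and nc: "\<not> cords_connected X L"
  shows "rk E L + 2 \<le> card E"
proof -
  obtain u v where uv: "u \<in> X" "v \<in> X" "(u, v) \<notin> (adj_rel L)\<^sup>*"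
    using nc unfolding cords_connected_def graph_connected_def by blast
  define C where "C = {z. (u, z) \<in> (adj_rel L)\<^sup>*}"
  define s1 where "s1 z = (if z \<in> C then sgnA A z else 0)" for z
  define s2 where "s2 z = (if z \<in> C then 0 else sgnA A z)" for z
  have CC: "x \<in> C \<longleftrightarrow> y \<in> C" if "{x, y} \<in> L" "x \<noteq> y" for x y
  proof -
    have xy: "(x, y) \<in> adj_rel L" "(y, x) \<in> adj_rel L" using that by (auto simp: adj_rel_def insert_commute)
    show ?thesis unfolding C_def using xy by (auto intro: rtrancl_into_rtrancl)
  qed
  have sv: "sgnA A x + sgnA A y = 0" if "{x, y} \<in> L" for x y using sgn_vanish[OF J AB that] .
  show ?thesis
  proof (rule bound2[OF xt L])
    fix f assume f: "f \<in> Sset E L"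
    show "f (omega X s1) = 0"
    proof (rule vanish[OF xt L _ f])
      fix x y assume "{x, y} \<in> L" "x \<noteq> y"
      then show "s1 x + s1 y = 0" using CC sv unfolding s1_def by auto
    qed
    show "f (omega X s2) = 0"
    proof (rule vanish[OF xt L _ f])
      fix x y assume "{x, y} \<in> L" "x \<noteq> y"
      then show "s2 x + s2 y = 0" using CC sv unfolding s2_def by auto
    qed
  next
    have uC: "u \<in> C" "v \<notin> C" using uv unfolding C_def by auto
    show "delta (pedge E u) \<in> VS.span (delta ` E)" by (rule delta_span[OF xt uv(1)])
    show "delta (pedge E u) (omega X s1) \<noteq> 0"
      using delta_eval[OF xt n3 uv(1)] uC by (simp add: s1_def sgnA_def)
    show "delta (pedge E u) (omega X s2) = 0"
      using delta_eval[OF xt n3 uv(1)] uC by (simp add: s2_def)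
    show "delta (pedge E v) \<in> VS.span (delta ` E)" by (rule delta_span[OF xt uv(2)])
    show "delta (pedge E v) (omega X s2) \<noteq> 0"
      using delta_eval[OF xt n3 uv(2)] uC by (simp add: s2_def sgnA_def)
  qed
qed
lemma per_L:
  assumes xt: "X_tree V E X" and n3: "3 \<le> card X"
    and L: "L \<subseteq> cords X" and bip: "cords_bipartite X L"
  shows "rk E L \<le> card E - 1
    \<and> ((rk E L = card E - 1
            \<longleftrightarrow> (\<exists>c\<in>cords X. edge_weight_lasso E X (L \<union> {c})))
       \<and> (rk E L = card E - 1
            \<longleftrightarrow> cords_connected X L
                \<and> (\<forall>c\<in>cords X. edge_weight_lasso E X (L \<union> {c})
                        \<longleftrightarrow> \<not> cords_bipartite X (L \<union> {c})))
       \<and> (rk E L = card E - 1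
            \<longleftrightarrow> cords_connected X L
                \<and> (\<exists>A B. A \<noteq> {} \<and> B \<noteq> {} \<and> A \<inter> B = {} \<and> A \<union> B = X \<and> L \<subseteq> join A B
                        \<and> closure_T E X L = join A B \<and> hyperplane E X (join A B))))"
proof -
  obtain A B where AB: "A \<inter> B = {}" "A \<union> B = X" and J: "L \<subseteq> join A B"
    using bip unfolding cords_bipartite_def by blast
  define r where "r = rk E L"
  define m where "m = card E"
  have b1: "r + 1 \<le> m" unfolding r_def m_def by (rule bip_bound[OF xt n3 L J AB(1)])
  obtain a a' where aa: "a \<in> X" "a' \<in> X" "a \<noteq> a'" and same: "a \<in> A \<longleftrightarrow> a' \<in> A"
    using same_side_pair[OF n3 AB] by blast
  have ca: "{a, a'} \<in> cords X" using cords_mem[OF aa] .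
  have La: "L \<union> {{a, a'}} \<subseteq> cords X" using L ca by blast
  have ra: "rk E (L \<union> {{a, a'}}) = r + 1"
    unfolding r_def by (rule raise[OF xt n3 L J AB(1) aa same])
  have insle: "rk E (L \<union> {c}) \<le> r + 1" if "c \<in> cords X" for c
    unfolding r_def by (rule ins_le[OF xt L that])
  have fromext: "r = m - 1" if "c \<in> cords X" "rk E (L \<union> {c}) = m" for c
    using insle[OF that(1)] that(2) b1 by linarith
  have conn: "cords_connected X L" if "r = m - 1"
  proof (rule ccontr)
    assume "\<not> cords_connected X L"
    then have "r + 2 \<le> m" unfolding r_def m_def by (rule disc[OF xt n3 L J AB(1)])
    then show False using that b1 by linarith
  qed
  have cls: "(x \<in> A \<longleftrightarrow> y \<in> A) \<longleftrightarrow> {x, y} \<notin> join A B" if "x \<in> X" "y \<in> X" "x \<noteq> y" for x y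
  proof
    assume s: "x \<in> A \<longleftrightarrow> y \<in> A"
    show "{x, y} \<notin> join A B"
    proof
      assume "{x, y} \<in> join A B"
      then show False using join_side[OF _ AB(1)] s AB(1) by blast
    qed
  next
    assume nj: "{x, y} \<notin> join A B"
    show "x \<in> A \<longleftrightarrow> y \<in> A"
    proof (rule ccontr)
      assume "\<not> (x \<in> A \<longleftrightarrow> y \<in> A)"
      then have "(x \<in> A \<and> y \<in> B) \<or> (x \<in> B \<and> y \<in> A)" using that AB by blast
      then have "{x, y} \<in> join A B" using join_mem[of x A y B] join_mem[of y A x B]
        by (auto simp: insert_commute)
      then show False using nj by blast
    qed
  qed
  have inj_bound: "rk E (L \<union> {c}) + 1 \<le> m" if "c \<in> join A B" for c
  proof -
    have "L \<union> {c} \<subseteq> join A B" using J that by blast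
    moreover have "L \<union> {c} \<subseteq> cords X" using L that join_cords[OF AB] by blast
    ultimately show ?thesis unfolding m_def using bip_bound[OF xt n3 _ _ AB(1)] by blast
  qed
  have part1: "r \<le> m - 1" using b1 by linarith
  have I1: "(r = m - 1) \<longleftrightarrow> (\<exists>c\<in>cords X. edge_weight_lasso E X (L \<union> {c}))"
  proof
    assume "r = m - 1"
    then have "rk E (L \<union> {{a, a'}}) = m" using ra b1 by linarith
    then show "\<exists>c\<in>cords X. edge_weight_lasso E X (L \<union> {c})"
      using ca La unfolding edge_weight_lasso_def m_def by blast
  next
    assume "\<exists>c\<in>cords X. edge_weight_lasso E X (L \<union> {c})"
    then obtain c where "c \<in> cords X" "rk E (L \<union> {c}) = m"
      unfolding edge_weight_lasso_def m_def by blast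
    then show "r = m - 1" by (rule fromext)
  qed
  have I2: "(r = m - 1) \<longleftrightarrow> cords_connected X L
                \<and> (\<forall>c\<in>cords X. edge_weight_lasso E X (L \<union> {c})
                        \<longleftrightarrow> \<not> cords_bipartite X (L \<union> {c}))"
  proof
    assume rm: "r = m - 1"
    have cn: "cords_connected X L" using conn[OF rm] .
    have "edge_weight_lasso E X (L \<union> {c}) \<longleftrightarrow> \<not> cords_bipartite X (L \<union> {c})"
      if c: "c \<in> cords X" for c
    proof -
      obtain x y where xy: "c = {x, y}" "x \<noteq> y" "x \<in> X" "y \<in> X" using cords_elem[OF c] by blast
      have Lc: "L \<union> {c} \<subseteq> cords X" using L c by blast
      show ?thesis
      proof (cases "x \<in> A \<longleftrightarrow> y \<in> A")
        case True
        have "rk E (L \<union> {c}) = r + 1"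
          unfolding r_def xy(1) by (rule raise[OF xt n3 L J AB(1) xy(3,4,2) True])
        then have "edge_weight_lasso E X (L \<union> {c})"
          using Lc rm b1 unfolding edge_weight_lasso_def m_def by simp
        moreover have "\<not> cords_bipartite X (L \<union> {c})"
          unfolding xy(1) by (rule nonbip[OF J AB cn xy(3,4) True])
        ultimately show ?thesis by simp
      next
        case False
        then have cj: "c \<in> join A B" using cls[OF xy(3,4,2)] xy(1) by simp
        then have "\<not> edge_weight_lasso E X (L \<union> {c})"
          using inj_bound[OF cj] unfolding edge_weight_lasso_def m_def by simp
        moreover have "cords_bipartite X (L \<union> {c})"
          unfolding cords_bipartite_def using AB J cj by blast
        ultimately show ?thesis by simp
      qed
    qed
    then show "cords_connected X L
                \<and> (\<forall>c\<in>cords X. edge_weight_lasso E X (L \<union> {c})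
                        \<longleftrightarrow> \<not> cords_bipartite X (L \<union> {c}))" using cn by blast
  next
    assume h: "cords_connected X L
                \<and> (\<forall>c\<in>cords X. edge_weight_lasso E X (L \<union> {c})
                        \<longleftrightarrow> \<not> cords_bipartite X (L \<union> {c}))"
    have "\<not> cords_bipartite X (L \<union> {{a, a'}})"
      by (rule nonbip[OF J AB _ aa(1,2) same]) (use h in blast)
    then have "edge_weight_lasso E X (L \<union> {{a, a'}})" using h ca by blast
    then have "rk E (L \<union> {{a, a'}}) = m" unfolding edge_weight_lasso_def m_def by simp
    then show "r = m - 1" by (rule fromext[OF ca])
  qed
  have I3: "(r = m - 1) \<longleftrightarrow> cords_connected X L
                \<and> (\<exists>A B. A \<noteq> {} \<and> B \<noteq> {} \<and> A \<inter> B = {} \<and> A \<union> B = X \<and> L \<subseteq> join A B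
                        \<and> closure_T E X L = join A B \<and> hyperplane E X (join A B))"
  proof
    assume rm: "r = m - 1"
    have cn: "cords_connected X L" using conn[OF rm] .
    have "(a, a') \<in> (adj_rel L)\<^sup>*" using cn aa unfolding cords_connected_def graph_connected_def by blast
    then obtain z where "(a, z) \<in> adj_rel L" using aa(3) by (metis converse_rtranclE)
    then have "{a, z} \<in> join A B" using J by (auto simp: adj_rel_def)
    then have ne: "A \<noteq> {}" "B \<noteq> {}" using join_side[OF _ AB(1)] by blast+
    have clo: "closure_T E X L = join A B"
    proof
      show "closure_T E X L \<subseteq> join A B"
      proof
        fix c assume "c \<in> closure_T E X L"
        then have c: "c \<in> cords X" and rc: "rk E (L \<union> {c}) = r"
          unfolding closure_T_def r_def by auto
        obtain x y where xy: "c = {x, y}" "x \<noteq> y" "x \<in> X" "y \<in> X" using cords_elem[OF c] by blast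
        show "c \<in> join A B"
        proof (rule ccontr)
          assume "c \<notin> join A B"
          then have s: "x \<in> A \<longleftrightarrow> y \<in> A" using cls[OF xy(3,4,2)] xy(1) by simp
          have "rk E (L \<union> {c}) = r + 1"
            unfolding r_def xy(1) by (rule raise[OF xt n3 L J AB(1) xy(3,4,2) s])
          then show False using rc by simp
        qed
      qed
      show "join A B \<subseteq> closure_T E X L"
      proof
        fix c assume cj: "c \<in> join A B"
        have c: "c \<in> cords X" using cj join_cords[OF AB] by blast
        have "rk E L \<le> rk E (L \<union> {c})" by (rule rk_mono[OF xt _ ]) (use L c in auto)
        moreover have "rk E (L \<union> {c}) + 1 \<le> m" by (rule inj_bound[OF cj])
        ultimately have "rk E (L \<union> {c}) = r" using rm b1 unfolding r_def by linarith
        then show "c \<in> closure_T E X L" unfolding closure_T_def r_def using c by simp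
      qed
    qed
    have hyp: "hyperplane E X (join A B)"
      unfolding hyperplane_def
    proof (intro conjI allI impI)
      show jc: "join A B \<subseteq> cords X" by (rule join_cords[OF AB])
      have "rk E (join A B) + 1 \<le> card E" by (rule bip_bound[OF xt n3 jc _ AB(1)]) simp
      then show "rk E (join A B) < card E" by simp
      fix H' assume H': "join A B \<subset> H' \<and> H' \<subseteq> cords X"
      then obtain c where c: "c \<in> H'" "c \<notin> join A B" by blast
      have cc: "c \<in> cords X" using c H' by blast
      obtain x y where xy: "c = {x, y}" "x \<noteq> y" "x \<in> X" "y \<in> X" using cords_elem[OF cc] by blast
      have s: "x \<in> A \<longleftrightarrow> y \<in> A" using cls[OF xy(3,4,2)] xy(1) c(2) by simp
      have "rk E (L \<union> {c}) = r + 1"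
        unfolding r_def xy(1) by (rule raise[OF xt n3 L J AB(1) xy(3,4,2) s])
      moreover have "rk E (L \<union> {c}) \<le> rk E H'"
        by (rule rk_mono[OF xt]) (use J H' c in auto)
      ultimately show "\<not> rk E H' < card E" using rm b1 unfolding m_def by linarith
    qed
    show "cords_connected X L
                \<and> (\<exists>A B. A \<noteq> {} \<and> B \<noteq> {} \<and> A \<inter> B = {} \<and> A \<union> B = X \<and> L \<subseteq> join A B
                        \<and> closure_T E X L = join A B \<and> hyperplane E X (join A B))"
      using cn ne AB J clo hyp by blast
  next
    assume "cords_connected X L
                \<and> (\<exists>A B. A \<noteq> {} \<and> B \<noteq> {} \<and> A \<inter> B = {} \<and> A \<union> B = X \<and> L \<subseteq> join A B
                        \<and> closure_T E X L = join A B \<and> hyperplane E X (join A B))"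
    then obtain A' B' where AB': "A' \<inter> B' = {}" "A' \<union> B' = X"
      and clo: "closure_T E X L = join A' B'" and hyp: "hyperplane E X (join A' B')" by blast
    obtain b b' where bb: "b \<in> X" "b' \<in> X" "b \<noteq> b'" and sb: "b \<in> A' \<longleftrightarrow> b' \<in> A'"
      using same_side_pair[OF n3 AB'] by blast
    have cb: "{b, b'} \<in> cords X" using cords_mem[OF bb] .
    have nj: "{b, b'} \<notin> join A' B'"
    proof
      assume "{b, b'} \<in> join A' B'"
      then show False using join_side[OF _ AB'(1)] sb AB'(1) by blast
    qed
    define H' where "H' = insert {b, b'} (join A' B')"
    have H'c: "H' \<subseteq> cords X" unfolding H'_def using cb join_cords[OF AB'] by blast
    have "join A' B' \<subset> H'" unfolding H'_def using nj by blast
    then have geq: "\<not> rk E H' < card E" using hyp H'c unfolding hyperplane_def by blast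
    have finS: "finite (Sset E L)" using Sset_fin[OF L xt_finX[OF xt]] .
    have JS: "Sset E (join A' B') \<subseteq> VS.span (Sset E L)"
    proof
      fix f assume "f \<in> Sset E (join A' B')"
      then obtain x y where f: "f = lam E x y" "{x, y} \<in> join A' B'" "x \<noteq> y"
        unfolding Sset_def by blast
      have xyc: "{x, y} \<in> cords X" using f(2) join_cords[OF AB'] by blast
      then have xX: "x \<in> X" "y \<in> X" by (auto simp: cords_def)
      have "rk E (L \<union> {{x, y}}) = rk E L" using f(2) clo unfolding closure_T_def by blast
      then have "VS.dim (insert (lam E x y) (Sset E L)) = VS.dim (Sset E L)"
        unfolding rk_Sset Sset_insert[OF xt xX f(3)] .
      then show "f \<in> VS.span (Sset E L)" using dim_insert_fin[OF finS, of "lam E x y"] f(1)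
        by (auto split: if_splits)
    qed
    have HS: "Sset E H' \<subseteq> VS.span (insert (lam E b b') (Sset E L))"
    proof -
      have eqH: "Sset E H' = insert (lam E b b') (Sset E (join A' B'))"
        unfolding H'_def using Sset_insert[OF xt bb, of "join A' B'"] by simp
      have sp: "VS.span (Sset E L) \<subseteq> VS.span (insert (lam E b b') (Sset E L))"
        by (rule VS.span_mono) blast
      have bs: "lam E b b' \<in> VS.span (insert (lam E b b') (Sset E L))"
        by (rule VS.span_base) simp
      have "Sset E (join A' B') \<subseteq> VS.span (insert (lam E b b') (Sset E L))"
        using JS sp by (rule subset_trans)
      then show ?thesis unfolding eqH insert_subset using bs by simp
    qed
    have "rk E H' \<le> VS.dim (insert (lam E b b') (Sset E L))"
      unfolding rk_Sset by (rule dim_mono_fin[OF _ HS]) (use finS in simp)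
    also have "\<dots> \<le> r + 1" unfolding r_def rk_Sset by (rule dim_insert_le[OF finS])
    finally have "rk E H' \<le> r + 1" .
    then show "r = m - 1" using geq b1 unfolding m_def by linarith
  qed
  show ?thesis using part1 I1 I2 I3 unfolding r_def m_def by blast
qed

theorem mainTheorem9:
  fixes V :: "'a set" and E :: "'a set set" and X :: "'a set"
  assumes tree: "X_tree V E X"
    and n3: "card X \<ge> 3"
  shows "(\<forall>L. L \<subseteq> cords X \<and> cords_bipartite X L \<longrightarrow> rk E L \<le> card E - 1)
    \<and> (\<forall>L. L \<subseteq> cords X \<and> cords_bipartite X L \<longrightarrow>
        ((rk E L = card E - 1
            \<longleftrightarrow> (\<exists>c\<in>cords X. edge_weight_lasso E X (L \<union> {c})))
       \<and> (rk E L = card E - 1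
            \<longleftrightarrow> cords_connected X L
                \<and> (\<forall>c\<in>cords X. edge_weight_lasso E X (L \<union> {c})
                        \<longleftrightarrow> \<not> cords_bipartite X (L \<union> {c})))
       \<and> (rk E L = card E - 1
            \<longleftrightarrow> cords_connected X L
                \<and> (\<exists>A B. A \<noteq> {} \<and> B \<noteq> {} \<and> A \<inter> B = {} \<and> A \<union> B = X \<and> L \<subseteq> join A B
                        \<and> closure_T E X L = join A B \<and> hyperplane E X (join A B)))))"
proof (intro conjI allI impI)
  fix L assume "L \<subseteq> cords X \<and> cords_bipartite X L"
  then show "rk E L \<le> card E - 1" using per_L[OF tree n3] by blast
next
  fix L assume H: "L \<subseteq> cords X \<and> cords_bipartite X L"
  have P: "rk E L \<le> card E - 1
    \<and> ((rk E L = card E - 1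
            \<longleftrightarrow> (\<exists>c\<in>cords X. edge_weight_lasso E X (L \<union> {c})))
       \<and> (rk E L = card E - 1
            \<longleftrightarrow> cords_connected X L
                \<and> (\<forall>c\<in>cords X. edge_weight_lasso E X (L \<union> {c})
                        \<longleftrightarrow> \<not> cords_bipartite X (L \<union> {c})))
       \<and> (rk E L = card E - 1
            \<longleftrightarrow> cords_connected X L
                \<and> (\<exists>A B. A \<noteq> {} \<and> B \<noteq> {} \<and> A \<inter> B = {} \<and> A \<union> B = X \<and> L \<subseteq> join A B
                        \<and> closure_T E X L = join A B \<and> hyperplane E X (join A B))))"
    using per_L[OF tree n3] H by blast
  show "rk E L = card E - 1 \<longleftrightarrow> (\<exists>c\<in>cords X. edge_weight_lasso E X (L \<union> {c}))"
    using P by (rule conjunct1[OF conjunct2])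
  show "rk E L = card E - 1
            \<longleftrightarrow> cords_connected X L
                \<and> (\<forall>c\<in>cords X. edge_weight_lasso E X (L \<union> {c})
                        \<longleftrightarrow> \<not> cords_bipartite X (L \<union> {c}))"
    using P by (rule conjunct1[OF conjunct2[OF conjunct2]])
  show "rk E L = card E - 1
            \<longleftrightarrow> cords_connected X L
                \<and> (\<exists>A B. A \<noteq> {} \<and> B \<noteq> {} \<and> A \<inter> B = {} \<and> A \<union> B = X \<and> L \<subseteq> join A B
                        \<and> closure_T E X L = join A B \<and> hyperplane E X (join A B))"
    using P by (rule conjunct2[OF conjunct2[OF conjunct2]])
qed

end
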